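(* In the model described in the context, for $f\in\mathbb{R}$ let $X(f)\subseteq\mathbb{R}_+$ be the set of symmetric leader reactions when all followers take forward position $f$. There exist unique $\underline f,\bar f\in\mathbb{R}$ such that $f\in[\underline f,\bar f]$ if and only if $\frac1M(\alpha_x-\triangle C+f)\in X(f)$. Moreover: (1) $y_j\big(f\mathbf1,\frac1M(\alpha_x-\triangle C+f)\mathbf1\big)=0$ for all $f\in[\underline f,\bar f]$; (2) $\bar f-\underline f=O(\alpha_x/M)$.
   Context: Model: $M\ge1$ leaders and $N\ge2$ followers; inverse demand $P(q)=\alpha-\beta q$, $\alpha,\beta>0$; leader marginal cost $C$, follower marginal cost $c$, $c\ge C>0$; follower capacity $k>0$. Leader $i$ produces $x_i\ge0$; follower $j$ takes forward position $f_j\in\mathbb{R}$ and spot production $y_j\in[0,k]$. Given $\mathbf f,\mathbf x$, the spot market is the game among followers where follower $j$ chooses $y_j\in[0,k]$ to maximize $P(\sum_ix_i+\sum_{j'}y_{j'})(y_j-f_j)-cy_j$; its unique Nash equilibrium is $\mathbf y(\mathbf f,\mathbf x)=(y_1(\mathbf f,\mathbf x),\dots,y_N(\mathbf f,\mathbf x))$. Leader $i$'s payoff is $\psi_i=(P(\sum_ix_i+\sum_{j'}y_{j'}(\mathbf f,\mathbf x))-C)x_i$; $\psi_i(\bar x;x\mathbf1,f\mathbf1)$ denotes this payoff when leader $i$ produces $\bar x$, all other leaders produce $x$, and all followers take $f$. $X(f)=\{x\in\mathbb{R}_+:\ \psi_i(x;x\mathbf1,f\mathbf1)\ge\psi_i(\bar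 x;x\mathbf1,f\mathbf1)\ \forall\bar x\in\mathbb{R}_+,\ \forall i\}$. $\alpha_x=(\alpha-C)/\beta$, $\triangle C=(c-C)/\beta$. $O(\cdot)$ is standard Landau notation. *)

theory Defs
  imports Main "HOL.Real"
begin

definition price :: "real \<Rightarrow> real \<Rightarrow> real \<Rightarrow> real" where
  "price \<alpha> \<beta> q = \<alpha> - \<beta> * q"

text \<open>Leaders are indexed by 0..<M, followers by 0..<N.  Vectors are functions on nat;
  spot production vectors are normalised to 0 outside 0..<N so that the equilibrium is
  a unique object.\<close>

definition spot_payoff ::
  "real \<Rightarrow> real \<Rightarrow> real \<Rightarrow> nat \<Rightarrow> nat \<Rightarrow> (nat \<Rightarrow> real) \<Rightarrow> (nat \<Rightarrow> real) \<Rightarrow> (nat \<Rightarrow> real) \<Rightarrow> nat \<Rightarrow> real" where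
  "spot_payoff \<alpha> \<beta> c M N f x y j =
     price \<alpha> \<beta> ((\<Sum>i<M. x i) + (\<Sum>j'<N. y j')) * (y j - f j) - c * y j"

definition spot_NE ::
  "real \<Rightarrow> real \<Rightarrow> real \<Rightarrow> real \<Rightarrow> nat \<Rightarrow> nat \<Rightarrow> (nat \<Rightarrow> real) \<Rightarrow> (nat \<Rightarrow> real) \<Rightarrow> (nat \<Rightarrow> real) \<Rightarrow> bool" where
  "spot_NE \<alpha> \<beta> c k M N f x y \<longleftrightarrow>
     (\<forall>j. N \<le> j \<longrightarrow> y j = 0) \<and>
     (\<forall>j<N. 0 \<le> y j \<and> y j \<le> k \<and>
        (\<forall>z. 0 \<le> z \<and> z \<le> k \<longrightarrow>
           spot_payoff \<alpha> \<beta> c M N f x (y(j := z)) j \<le> spot_payoff \<alpha> \<beta> c M N f x y j))"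

definition spot_y ::
  "real \<Rightarrow> real \<Rightarrow> real \<Rightarrow> real \<Rightarrow> nat \<Rightarrow> nat \<Rightarrow> (nat \<Rightarrow> real) \<Rightarrow> (nat \<Rightarrow> real) \<Rightarrow> (nat \<Rightarrow> real)" where
  "spot_y \<alpha> \<beta> c k M N f x = (THE y. spot_NE \<alpha> \<beta> c k M N f x y)"

definition leader_payoff ::
  "real \<Rightarrow> real \<Rightarrow> real \<Rightarrow> real \<Rightarrow> real \<Rightarrow> nat \<Rightarrow> nat \<Rightarrow> (nat \<Rightarrow> real) \<Rightarrow> (nat \<Rightarrow> real) \<Rightarrow> nat \<Rightarrow> real" where
  "leader_payoff \<alpha> \<beta> C c k M N f x i =
     (price \<alpha> \<beta> ((\<Sum>i'<M. x i') + (\<Sum>j<N. spot_y \<alpha> \<beta> c k M N f x j)) - C) * x i"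

definition psi_sym ::
  "real \<Rightarrow> real \<Rightarrow> real \<Rightarrow> real \<Rightarrow> real \<Rightarrow> nat \<Rightarrow> nat \<Rightarrow> nat \<Rightarrow> real \<Rightarrow> real \<Rightarrow> real \<Rightarrow> real" where
  "psi_sym \<alpha> \<beta> C c k M N i xbar x f =
     leader_payoff \<alpha> \<beta> C c k M N (\<lambda>_. f) ((\<lambda>_. x)(i := xbar)) i"

definition Xset ::
  "real \<Rightarrow> real \<Rightarrow> real \<Rightarrow> real \<Rightarrow> real \<Rightarrow> nat \<Rightarrow> nat \<Rightarrow> real \<Rightarrow> real set" where
  "Xset \<alpha> \<beta> C c k M N f =
     {x. 0 \<le> x \<and> (\<forall>i<M. \<forall>xbar. 0 \<le> xbar \<longrightarrow>
          psi_sym \<alpha> \<beta> C c k M N i x x f \<ge> psi_sym \<alpha> \<beta> C c k M N i xbar x f)}"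

end

theory Submission
  imports Defs
begin


lemma sum_upd:
  fixes y :: "nat \<Rightarrow> real"
  assumes "j < N"
  shows "(\<Sum>j'<N. (y(j:=w)) j') = (\<Sum>j'<N. y j') - y j + w"
proof -
  have "(\<Sum>j'<N. (y(j:=w)) j') = (\<Sum>j'<N. y j' + (if j' = j then w - y j else 0))"
    by (rule sum.cong) auto
  also have "\<dots> = (\<Sum>j'<N. y j') + (w - y j)"
    using assms by (simp add: sum.distrib)
  finally show ?thesis by simp
qed

lemma payoff_diff:
  assumes "j < N"
  shows "spot_payoff \<alpha> \<beta> c M N f x (y(j:=w)) j - spot_payoff \<alpha> \<beta> c M N f x y j
    = (w - y j) * (\<alpha> - \<beta> * ((\<Sum>i<M. x i) + (\<Sum>j'<N. y j')) - c - \<beta> * (y j - f j)) - \<beta> * (w - y j)^2"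
  unfolding spot_payoff_def price_def sum_upd[OF assms]
  by (simp add: power2_eq_square algebra_simps)

lemma vi_lemma:
  fixes v g z k \<beta> :: real
  assumes H: "\<forall>w. 0 \<le> w \<and> w \<le> k \<longrightarrow> (w - v) * g - \<beta> * (w - v)^2 \<le> 0"
    and v: "0 \<le> v" "v \<le> k" and z: "0 \<le> z" "z \<le> k" and b: "\<beta> > 0"
  shows "(z - v) * g \<le> 0"
proof (rule ccontr)
  assume "\<not> ?thesis"
  hence p: "(z - v) * g > 0" by simp
  hence zv: "z \<noteq> v" by auto
  define e where "e = (z - v)^2"
  have e: "e > 0" using zv by (simp add: e_def)
  define t where "t = min 1 ((z - v) * g / (2 * \<beta> * e))"
  have t0: "t > 0" using p e b by (simp add: t_def)
  have t1: "t \<le> 1" by (simp add: t_def)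
  have t2: "t \<le> (z - v) * g / (2 * \<beta> * e)" by (simp add: t_def)
  define w where "w = v + t * (z - v)"
  have w0: "0 \<le> w" and wk: "w \<le> k"
  proof -
    have "w = (1 - t) * v + t * z" by (simp add: w_def algebra_simps)
    moreover have "0 \<le> (1 - t) * v + t * z" using t0 t1 v z by simp
    moreover have "(1 - t) * v + t * z \<le> (1 - t) * k + t * k"
      using t0 t1 v z by (intro add_mono mult_left_mono) auto
    ultimately show "0 \<le> w" "w \<le> k" by (auto simp: algebra_simps)
  qed
  have "(w - v) * g - \<beta> * (w - v)^2 \<le> 0" using H w0 wk by blast
  moreover have "w - v = t * (z - v)" by (simp add: w_def)
  ultimately have "(t * (z - v)) * g - \<beta> * (t * (z - v))^2 \<le> 0" by simp
  hence "t * ((z - v) * g) - \<beta> * t^2 * e \<le> 0"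
    unfolding e_def power_mult_distrib by (simp add: algebra_simps)
  hence "t * ((z - v) * g) \<le> t * (\<beta> * t * e)" by (simp add: power2_eq_square algebra_simps)
  hence "(z - v) * g \<le> \<beta> * t * e" using t0 by simp
  also have "\<beta> * t * e \<le> \<beta> * ((z - v) * g / (2 * \<beta> * e)) * e"
    using t2 b e by (intro mult_right_mono mult_left_mono) auto
  also have "\<dots> = (z - v) * g / 2" using b e by (simp add: field_simps)
  finally have "(z - v) * g \<le> (z - v) * g / 2" .
  thus False using p by linarith
qed

lemma NE_vi:
  assumes ne: "spot_NE \<alpha> \<beta> c k M N f x y" and b: "\<beta> > 0" and j: "j < N"
    and z: "0 \<le> z" "z \<le> k"
  shows "(z - y j) * (\<alpha> - \<beta> * ((\<Sum>i<M. x i) + (\<Sum>j'<N. y j')) - c - \<beta> * (y j - f j)) \<le> 0"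
proof -
  from ne j have yj: "0 \<le> y j" "y j \<le> k" and
    br: "\<forall>w. 0 \<le> w \<and> w \<le> k \<longrightarrow> spot_payoff \<alpha> \<beta> c M N f x (y(j := w)) j \<le> spot_payoff \<alpha> \<beta> c M N f x y j"
    unfolding spot_NE_def by auto
  show ?thesis
  proof (rule vi_lemma[OF _ yj z b], intro allI impI)
    fix w assume "0 \<le> w \<and> w \<le> k"
    with br have "spot_payoff \<alpha> \<beta> c M N f x (y(j := w)) j - spot_payoff \<alpha> \<beta> c M N f x y j \<le> 0" by auto
    thus "(w - y j) * (\<alpha> - \<beta> * ((\<Sum>i<M. x i) + (\<Sum>j'<N. y j')) - c - \<beta> * (y j - f j)) - \<beta> * (w - y j)^2 \<le> 0"
      using payoff_diff[OF j] by simp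
  qed
qed

lemma NE_unique:
  assumes ne1: "spot_NE \<alpha> \<beta> c k M N f x y" and ne2: "spot_NE \<alpha> \<beta> c k M N f x y'" and b: "\<beta> > 0"
  shows "y = y'"
proof -
  define X where "X = (\<Sum>i<M. x i)"
  define Y where "Y = (\<Sum>j'<N. y j')"
  define Y' where "Y' = (\<Sum>j'<N. y' j')"
  have r1: "0 \<le> y' j" "y' j \<le> k" if "j < N" for j using ne2 that unfolding spot_NE_def by auto
  have r2: "0 \<le> y j" "y j \<le> k" if "j < N" for j using ne1 that unfolding spot_NE_def by auto
  have a: "(y' j - y j) * (\<alpha> - \<beta> * (X + Y) - c - \<beta> * (y j - f j))
      + (y j - y' j) * (\<alpha> - \<beta> * (X + Y') - c - \<beta> * (y' j - f j)) \<le> 0" if j: "j < N" for j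
    using NE_vi[OF ne1 b j r1[OF j]] NE_vi[OF ne2 b j r2[OF j]] unfolding X_def Y_def Y'_def by linarith
  have eq: "(y' j - y j) * (\<alpha> - \<beta> * (X + Y) - c - \<beta> * (y j - f j))
      + (y j - y' j) * (\<alpha> - \<beta> * (X + Y') - c - \<beta> * (y' j - f j))
      = \<beta> * (Y - Y') * (y j - y' j) + \<beta> * (y j - y' j)^2" for j
    by (simp add: power2_eq_square algebra_simps)
  have "(\<Sum>j<N. \<beta> * (Y - Y') * (y j - y' j) + \<beta> * (y j - y' j)^2) \<le> 0"
    using a eq by (intro sum_nonpos) auto
  moreover have "(\<Sum>j<N. \<beta> * (Y - Y') * (y j - y' j) + \<beta> * (y j - y' j)^2)
     = \<beta> * (Y - Y')^2 + \<beta> * (\<Sum>j<N. (y j - y' j)^2)"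
    by (simp add: sum.distrib sum_distrib_left[symmetric] sum_subtractf Y_def Y'_def power2_eq_square)
  ultimately have "\<beta> * (\<Sum>j<N. (y j - y' j)^2) \<le> 0"
    using b by (smt (verit) mult_nonneg_nonneg zero_le_power2)
  hence s0: "(\<Sum>j<N. (y j - y' j)^2) \<le> 0" using b by (simp add: mult_le_0_iff)
  have "(\<Sum>j<N. (y j - y' j)^2) = 0" using s0 by (smt (verit) sum_nonneg zero_le_power2)
  hence "\<forall>j\<in>{..<N}. (y j - y' j)^2 = 0" by (subst (asm) sum_nonneg_eq_0_iff) auto
  hence "y j = y' j" if "j < N" for j using that by auto
  moreover have "y j = y' j" if "\<not> j < N" for j using that ne1 ne2 unfolding spot_NE_def by auto
  ultimately show ?thesis by (metis ext)
qed



definition clampv :: "real \<Rightarrow> real \<Rightarrow> real" where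
  "clampv k t = max 0 (min k t)"

lemma clampv_sign:
  fixes w v k a :: real
  assumes "0 \<le> w" "w \<le> k" "k > 0"
  shows "(w - clampv k a) * (a - clampv k a) \<le> 0"
proof (cases "a \<le> 0")
  case True
  hence "clampv k a = 0" using assms by (simp add: clampv_def)
  thus ?thesis using True assms by (simp add: mult_nonneg_nonpos)
next
  case False
  show ?thesis
  proof (cases "a \<le> k")
    case True
    hence "clampv k a = a" using False by (simp add: clampv_def)
    thus ?thesis by simp
  next
    case F2: False
    hence "clampv k a = k" using assms by (simp add: clampv_def)
    thus ?thesis using F2 assms by (simp add: mult_nonpos_nonneg)
  qed
qed

lemma clampv_bounds: "k > 0 \<Longrightarrow> 0 \<le> clampv k a \<and> clampv k a \<le> k"
  by (simp add: clampv_def)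

lemma NE_exists:
  fixes \<alpha> \<beta> c k f :: real and M N :: nat and x :: "nat \<Rightarrow> real"
  assumes b: "\<beta> > 0" and k: "k > 0"
  defines "v \<equiv> clampv k ((\<alpha> - c - \<beta> * (\<Sum>i<M. x i) + \<beta> * f) / (\<beta> * (real N + 1)))"
  shows "spot_NE \<alpha> \<beta> c k M N (\<lambda>_. f) x (\<lambda>j. if j < N then v else 0)"
proof -
  define y0 where "y0 = (\<lambda>j::nat. if j < N then v else (0::real))"
  define X where "X = (\<Sum>i<M. x i)"
  define a where "a = (\<alpha> - c - \<beta> * X + \<beta> * f) / (\<beta> * (real N + 1))"
  have vdef: "v = clampv k a" unfolding v_def a_def X_def ..
  have sY: "(\<Sum>j'<N. y0 j') = real N * v" unfolding y0_def by simp
  have vb: "0 \<le> v" "v \<le> k" using clampv_bounds[OF k] vdef by auto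
  have "spot_payoff \<alpha> \<beta> c M N (\<lambda>_. f) x (y0(j := w)) j \<le> spot_payoff \<alpha> \<beta> c M N (\<lambda>_. f) x y0 j"
    if j: "j < N" and w: "0 \<le> w" "w \<le> k" for j w
  proof -
    have g: "\<alpha> - \<beta> * (X + real N * v) - c - \<beta> * (v - f) = \<beta> * (real N + 1) * (a - v)"
    proof -
      have "\<beta> * (real N + 1) * a = \<alpha> - c - \<beta> * X + \<beta> * f"
        unfolding a_def using b by (simp add: add_pos_nonneg)
      thus ?thesis by (simp add: algebra_simps)
    qed
    have "(w - v) * (\<beta> * (real N + 1) * (a - v)) \<le> 0"
    proof -
      have "(w - v) * (a - v) \<le> 0" using clampv_sign[OF w k] vdef by simp
      moreover have "\<beta> * (real N + 1) > 0" using b by simp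
      ultimately show ?thesis
        by (metis mult.left_commute mult_nonneg_nonpos less_le)
    qed
    moreover have "spot_payoff \<alpha> \<beta> c M N (\<lambda>_. f) x (y0(j := w)) j - spot_payoff \<alpha> \<beta> c M N (\<lambda>_. f) x y0 j
       = (w - v) * (\<beta> * (real N + 1) * (a - v)) - \<beta> * (w - v)^2"
      using payoff_diff[OF j, of \<alpha> \<beta> c M "\<lambda>_. f" x y0 w] sY g j
      unfolding X_def by (simp add: y0_def)
    moreover have "\<beta> * (w - v)^2 \<ge> 0" using b by simp
    ultimately show ?thesis by linarith
  qed
  thus ?thesis unfolding spot_NE_def y0_def[symmetric] using vb by (auto simp: y0_def)
qed

lemma spot_y_formula:
  assumes b: "\<beta> > 0" and k: "k > 0"
  shows "spot_y \<alpha> \<beta> c k M N (\<lambda>_. f) x = (\<lambda>j. if j < N then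
     clampv k ((\<alpha> - c - \<beta> * (\<Sum>i<M. x i) + \<beta> * f) / (\<beta> * (real N + 1))) else 0)"
proof -
  have E: "spot_NE \<alpha> \<beta> c k M N (\<lambda>_. f) x (\<lambda>j. if j < N then
     clampv k ((\<alpha> - c - \<beta> * (\<Sum>i<M. x i) + \<beta> * f) / (\<beta> * (real N + 1))) else 0)"
    by (rule NE_exists[OF b k])
  show ?thesis unfolding spot_y_def
    using E NE_unique[OF _ E b] by (rule the_equality)
qed



definition Rf :: "real \<Rightarrow> real \<Rightarrow> nat \<Rightarrow> nat \<Rightarrow> real \<Rightarrow> real \<Rightarrow> real" where
  "Rf A T M N k xbar = (A - (T - T / real M + xbar) - real N * clampv k ((T / real M - xbar) / (real N + 1))) * xbar"

definition CondR :: "real \<Rightarrow> real \<Rightarrow> nat \<Rightarrow> nat \<Rightarrow> real \<Rightarrow> bool" where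
  "CondR A T M N k \<longleftrightarrow> 0 \<le> T / real M \<and> (\<forall>xbar. 0 \<le> xbar \<longrightarrow> Rf A T M N k xbar \<le> Rf A T M N k (T / real M))"

definition gN :: "nat \<Rightarrow> real \<Rightarrow> real \<Rightarrow> real" where
  "gN N k d = d - real N * clampv k (d / (real N + 1))"

lemma gN_nonneg: assumes "0 \<le> d" "k > 0" shows "0 \<le> gN N k d"
proof -
  have "clampv k (d / (real N + 1)) \<le> d / (real N + 1)" using assms by (simp add: clampv_def)
  hence "real N * clampv k (d / (real N + 1)) \<le> real N * (d / (real N + 1))"
    by (rule mult_left_mono) simp_all
  also have "\<dots> \<le> d" using assms by (simp add: field_simps)
  finally show ?thesis by (simp add: gN_def)
qed

lemma clampv0: "k > 0 \<Longrightarrow> clampv k 0 = 0" by (simp add: clampv_def)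

lemma R_at: "k > 0 \<Longrightarrow> Rf A T M N k (T / real M) = (A - T) * (T / real M)"
  by (simp add: Rf_def clampv_def)

lemma R_right: assumes "k > 0" "T / real M \<le> xbar"
  shows "Rf A T M N k xbar = (A - T + T / real M - xbar) * xbar"
proof -
  have "(T / real M - xbar) / (real N + 1) \<le> 0" using assms by (simp add: divide_nonpos_pos add_pos_nonneg)
  hence "clampv k ((T / real M - xbar) / (real N + 1)) = 0" using assms by (simp add: clampv_def)
  thus ?thesis by (simp add: Rf_def algebra_simps)
qed

lemma R_left: assumes "k > 0"
  shows "Rf A T M N k (T / real M - d) - Rf A T M N k (T / real M) = - (A - T) * d + gN N k d * (T / real M - d)"
  using assms by (simp add: Rf_def gN_def clampv0 algebra_simps add_divide_distrib diff_divide_distrib)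

lemma right_ok:
  assumes k: "k > 0" and M: "M \<ge> 1" and Ts: "A - T \<le> T / real M" and xb: "T / real M \<le> xbar"
  shows "Rf A T M N k xbar \<le> Rf A T M N k (T / real M)"
proof -
  define x where "x = T / real M"
  define e where "e = xbar - x"
  have e: "e \<ge> 0" using xb by (simp add: e_def x_def)
  have "Rf A T M N k xbar - Rf A T M N k (T / real M) = e * ((A - T) - x) - e^2"
    using R_right[OF k xb, of A N] R_at[OF k, of A T M N]
    by (simp add: e_def x_def power2_eq_square algebra_simps add_divide_distrib diff_divide_distrib)
  moreover have "e * ((A - T) - x) \<le> 0" using e Ts by (simp add: x_def mult_nonneg_nonpos)
  ultimately show ?thesis by (smt (verit) zero_le_power2)
qed

lemma Cond_left:
  assumes c: "CondR A T M N k" and k: "k > 0" and d: "0 \<le> d" "d \<le> T / real M"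
  shows "- (A - T) * d + gN N k d * (T / real M - d) \<le> 0"
proof -
  have "Rf A T M N k (T / real M - d) \<le> Rf A T M N k (T / real M)"
    using c d unfolding CondR_def by auto
  thus ?thesis using R_left[OF k, of A T M N d] by linarith
qed

lemma Cond_intro:
  assumes k: "k > 0" and M: "M \<ge> 1" and Ts: "A - T \<le> T / real M" and x0: "0 \<le> T / real M"
    and L: "\<And>d. 0 < d \<Longrightarrow> d \<le> T / real M \<Longrightarrow> - (A - T) * d + gN N k d * (T / real M - d) \<le> 0"
  shows "CondR A T M N k"
  unfolding CondR_def
proof (intro conjI allI impI x0)
  fix xbar :: real assume xb: "0 \<le> xbar"
  show "Rf A T M N k xbar \<le> Rf A T M N k (T / real M)"
  proof (cases "T / real M \<le> xbar")
    case True thus ?thesis using right_ok[OF k M Ts] by blast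
  next
    case False
    define d where "d = T / real M - xbar"
    have "0 < d" "d \<le> T / real M" using False xb by (auto simp: d_def)
    hence "- (A - T) * d + gN N k d * (T / real M - d) \<le> 0" by (rule L)
    moreover have "Rf A T M N k xbar = Rf A T M N k (T / real M - d)" by (simp add: d_def)
    ultimately show ?thesis using R_left[OF k, of A T M N d] by linarith
  qed
qed



lemma gN_le: "k > 0 \<Longrightarrow> gN N k d \<le> d"
  by (simp add: gN_def clampv_def)

lemma Tstar_iff: assumes "M \<ge> 1"
  shows "A - T \<le> T / real M \<longleftrightarrow> real M * A / (real M + 1) \<le> T"
proof -
  have M: "real M > 0" using assms by simp
  have "A - T \<le> T / real M \<longleftrightarrow> real M * (A - T) \<le> T" using M by (simp add: field_simps)
  also have "\<dots> \<longleftrightarrow> real M * A \<le> T * (real M + 1)" by (simp add: algebra_simps)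
  also have "\<dots> \<longleftrightarrow> real M * A / (real M + 1) \<le> T" using M by (simp add: field_simps)
  finally show ?thesis .
qed

lemma R0: "Rf A T M N k 0 = 0" by (simp add: Rf_def)

lemma L_neg:
  assumes A: "A \<le> 0" and k: "k > 0" and M: "M \<ge> 1"
  shows "CondR A T M N k \<longleftrightarrow> T = 0"
proof
  assume c: "CondR A T M N k"
  hence x0: "0 \<le> T / real M" by (simp add: CondR_def)
  hence T0: "0 \<le> T" using M by (simp add: zero_le_divide_iff)
  show "T = 0"
  proof (rule ccontr)
    assume "T \<noteq> 0"
    hence "T > 0" using T0 by simp
    hence "T / real M > 0" using M by simp
    moreover have "A - T < 0" using A \<open>T > 0\<close> by simp
    ultimately have "(A - T) * (T / real M) < 0" by (intro mult_neg_pos) auto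
    hence "Rf A T M N k (T / real M) < 0" by (subst R_at[OF k])
    moreover have "Rf A T M N k 0 \<le> Rf A T M N k (T / real M)" using c by (simp add: CondR_def)
    ultimately show False by (simp add: R0)
  qed
next
  assume T: "T = 0"
  show "CondR A T M N k" unfolding CondR_def
  proof (intro conjI allI impI)
    show "0 \<le> T / real M" using T by simp
    fix xbar :: real assume xb: "0 \<le> xbar"
    have "Rf A T M N k xbar = (A - xbar) * xbar" using R_right[OF k, of T M xbar A N] T xb by simp
    also have "\<dots> \<le> 0" using A xb by (simp add: mult_nonpos_nonneg)
    finally show "Rf A T M N k xbar \<le> Rf A T M N k (T / real M)" using T by (simp add: R0)
  qed
qed

lemma L_star:
  assumes A: "A > 0" and k: "k > 0" and M: "M \<ge> 1"
  shows "CondR A (real M * A / (real M + 1)) M N k"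
proof -
  define T where "T = real M * A / (real M + 1)"
  have Mp: "real M > 0" using M by simp
  have M1: "real M + 1 > 0" by simp
  have e1: "A - T = A / (real M + 1)" using M1 by (simp add: T_def field_simps)
  have e2: "T / real M = A / (real M + 1)" using M1 Mp by (simp add: T_def)
  have ux: "A - T = T / real M" using e1 e2 by simp
  have Ts: "A - T \<le> T / real M" using ux by simp
  have x0: "0 \<le> T / real M" using A Mp by (simp add: T_def)
  show ?thesis unfolding T_def[symmetric]
  proof (rule Cond_intro[OF k M Ts x0])
    fix d :: real assume d: "0 < d" "d \<le> T / real M"
    have "gN N k d * (T / real M - d) \<le> d * (T / real M - d)"
      using gN_le[OF k] d by (intro mult_right_mono) auto
    also have "\<dots> \<le> d * (T / real M)" using d by (simp add: algebra_simps)
    finally show "- (A - T) * d + gN N k d * (T / real M - d) \<le> 0" using ux by (simp add: algebra_simps)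
  qed
qed

lemma L_lower:
  assumes c: "CondR A T M N k" and k: "k > 0" and M: "M \<ge> 1"
  shows "A - T \<le> T / real M"
proof (rule ccontr)
  assume "\<not> ?thesis"
  hence u: "A - T > T / real M" by simp
  define x where "x = T / real M"
  define \<delta> where "\<delta> = (A - T - x) / 2"
  have dp: "\<delta> > 0" using u by (simp add: \<delta>_def x_def)
  have x0: "0 \<le> x" using c by (simp add: CondR_def x_def)
  have "Rf A T M N k (x + \<delta>) = (A - T + x - (x + \<delta>)) * (x + \<delta>)"
    using R_right[OF k, of T M "x + \<delta>"] dp by (simp add: x_def)
  moreover have "Rf A T M N k (x + \<delta>) \<le> Rf A T M N k x"
    using c dp x0 unfolding CondR_def x_def by auto
  moreover have "Rf A T M N k x = (A - T) * x" using R_at[OF k] by (simp add: x_def)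
  moreover have "(A - T + x - (x + \<delta>)) * (x + \<delta>) - (A - T) * x = \<delta>^2"
    by (simp add: \<delta>_def power2_eq_square field_simps)
  ultimately show False using dp by (smt (verit) zero_less_power)
qed

lemma L_upper:
  assumes c: "CondR A T M N k" and k: "k > 0" and M: "M \<ge> 1" and A: "A > 0"
  shows "T \<le> A"
proof (rule ccontr)
  assume "\<not> ?thesis"
  hence TA: "T > A" by simp
  hence "T > 0" using A by simp
  hence "T / real M > 0" using M by simp
  hence "(A - T) * (T / real M) < 0" using TA by (intro mult_neg_pos) auto
  hence "Rf A T M N k (T / real M) < 0" by (subst R_at[OF k])
  moreover have "Rf A T M N k 0 \<le> Rf A T M N k (T / real M)" using c by (simp add: CondR_def)
  ultimately show False by (simp add: R0)
qed

lemma L_down: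
  assumes c: "CondR A T M N k" and k: "k > 0" and M: "M \<ge> 1"
    and T1: "A - T' \<le> T' / real M" and T2: "0 \<le> T'" and T3: "T' \<le> T"
  shows "CondR A T' M N k"
proof (rule Cond_intro[OF k M T1])
  show "0 \<le> T' / real M" using T2 by simp
  have le: "T' / real M \<le> T / real M" using T3 M by (simp add: divide_right_mono)
  fix d :: real assume d: "0 < d" "d \<le> T' / real M"
  have "- (A - T) * d + gN N k d * (T / real M - d) \<le> 0"
    using Cond_left[OF c k] d le by auto
  moreover have "- (A - T') * d \<le> - (A - T) * d" using d T3 by (simp add: mult_right_mono)
  moreover have "gN N k d * (T' / real M - d) \<le> gN N k d * (T / real M - d)"
    using gN_nonneg[of d k N] d k le by (intro mult_left_mono) auto
  ultimately show "- (A - T') * d + gN N k d * (T' / real M - d) \<le> 0" by linarith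
qed

lemma L_sup:
  fixes A k :: real and M N :: nat
  assumes A: "A > 0" and k: "k > 0" and M: "M \<ge> 1"
  defines "S \<equiv> {T. CondR A T M N k}"
  shows "S \<noteq> {}" "bdd_above S" "CondR A (Sup S) M N k"
    "real M * A / (real M + 1) \<le> Sup S" "Sup S \<le> A"
proof -
  define Tst where "Tst = real M * A / (real M + 1)"
  have st: "Tst \<in> S" using L_star[OF A k M] by (simp add: S_def Tst_def)
  show ne: "S \<noteq> {}" using st by auto
  have ub: "\<forall>T\<in>S. T \<le> A" using L_upper[OF _ k M A] by (simp add: S_def)
  show bdd: "bdd_above S" using ub by (auto simp: bdd_above_def)
  show lo: "real M * A / (real M + 1) \<le> Sup S" using cSup_upper[OF st bdd] by (simp add: Tst_def)
  show hi: "Sup S \<le> A" using cSup_least[OF ne] ub by blast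
  define Ts where "Ts = Sup S"
  have Mp: "real M > 0" using M by simp
  have Ts1: "A - Ts \<le> Ts / real M" using Tstar_iff[OF M] lo by (simp add: Ts_def)
  have Tst0: "0 \<le> Tst" using A Mp by (simp add: Tst_def)
  have x0: "0 \<le> Ts / real M" using lo Tst0 by (simp add: Ts_def Tst_def)
  show "CondR A (Sup S) M N k" unfolding Ts_def[symmetric]
  proof (rule Cond_intro[OF k M Ts1 x0])
    fix d :: real assume d: "0 < d" "d \<le> Ts / real M"
    show "- (A - Ts) * d + gN N k d * (Ts / real M - d) \<le> 0"
    proof (cases "d = Ts / real M")
      case True
      have "A - Ts \<ge> 0" using hi by (simp add: Ts_def)
      hence "(A - Ts) * d \<ge> 0" using d by simp
      moreover have "- (A - Ts) * d + gN N k d * (Ts / real M - d) = - ((A - Ts) * d)" using True by (simp only: diff_self mult_zero_right add_0_right)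
      ultimately show ?thesis by linarith
    next
      case False
      hence dl: "d < Ts / real M" using d by simp
      show ?thesis
      proof (rule ccontr)
        define E where "E = - (A - Ts) * d + gN N k d * (Ts / real M - d)"
        assume "\<not> ?thesis"
        hence E: "E > 0" by (simp add: E_def)
        define g where "g = gN N k d"
        have g0: "g \<ge> 0" using gN_nonneg[of d k N] d k by (simp add: g_def)
        define cc where "cc = d + g / real M"
        have cc: "cc > 0" using d g0 Mp by (simp add: cc_def add_pos_nonneg)
        have md: "real M * d < Ts" using dl Mp by (simp add: field_simps)
        have "max (real M * d) (Ts - E / cc) < Ts" using md E cc by simp
        then obtain T where TS: "T \<in> S" and TT: "max (real M * d) (Ts - E / cc) < T"
          using less_cSup_iff[OF ne bdd] by (auto simp: Ts_def)
        have TleTs: "T \<le> Ts" using cSup_upper[OF TS bdd] by (simp add: Ts_def)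
        have dT: "d \<le> T / real M" using TT Mp by (simp add: field_simps)
        have c1: "- (A - T) * d + g * (T / real M - d) \<le> 0"
          using Cond_left[of A T M N k d] TS k d dT by (simp add: S_def g_def)
        have "E - (- (A - T) * d + g * (T / real M - d)) = (Ts - T) * cc"
          by (simp add: E_def g_def[symmetric] cc_def field_simps diff_divide_distrib add_divide_distrib)
        moreover have "(Ts - T) * cc < E"
        proof -
          have "Ts - T < E / cc" using TT by simp
          thus ?thesis using cc by (simp add: field_simps)
        qed
        ultimately show False using c1 by linarith
      qed
    qed
  qed
qed


lemma psi_Rf:
  fixes \<alpha> \<beta> C c k f A D T xbar :: real and M N i :: nat
  assumes b: "\<beta> > 0" and k: "k > 0" and M: "M \<ge> 1" and i: "i < M"
    and A: "A = (\<alpha> - C) / \<beta>" and D: "D = (c - C) / \<beta>" and T: "T = A - D + f"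
  shows "psi_sym \<alpha> \<beta> C c k M N i xbar (T / real M) f = \<beta> * Rf A T M N k xbar"
proof -
  define x where "x = T / real M"
  have Mp: "real M > 0" using M by simp
  define Xs where "Xs = T - T / real M + xbar"
  have Xs: "(\<Sum>i'<M. ((\<lambda>_. x)(i := xbar)) i') = Xs"
    using sum_upd[OF i, of "\<lambda>_. x" xbar] Mp by (simp add: x_def Xs_def)
  have num: "\<alpha> - c - \<beta> * Xs + \<beta> * f = \<beta> * (T / real M - xbar)"
  proof -
    have "\<alpha> - c = \<beta> * (A - D)" using b by (simp add: A D field_simps)
    thus ?thesis by (simp add: Xs_def T algebra_simps)
  qed
  have v: "(\<alpha> - c - \<beta> * Xs + \<beta> * f) / (\<beta> * (real N + 1)) = (T / real M - xbar) / (real N + 1)"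
    unfolding num using b by simp
  have pr: "\<alpha> - \<beta> * (Xs + real N * clampv k ((T / real M - xbar) / (real N + 1))) - C
     = \<beta> * (A - Xs - real N * clampv k ((T / real M - xbar) / (real N + 1)))"
  proof -
    have "\<alpha> - C = \<beta> * A" using b by (simp add: A)
    thus ?thesis by (simp add: algebra_simps)
  qed
  have sy: "(\<Sum>j<N. spot_y \<alpha> \<beta> c k M N (\<lambda>_. f) ((\<lambda>_. x)(i := xbar)) j)
     = real N * clampv k ((\<alpha> - c - \<beta> * Xs + \<beta> * f) / (\<beta> * (real N + 1)))"
    unfolding spot_y_formula[OF b k] Xs by simp
  have "psi_sym \<alpha> \<beta> C c k M N i xbar x f
      = (\<alpha> - \<beta> * (Xs + real N * clampv k ((\<alpha> - c - \<beta> * Xs + \<beta> * f) / (\<beta> * (real N + 1)))) - C) * xbar"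
    unfolding psi_sym_def leader_payoff_def sy Xs price_def by simp
  also have "\<dots> = \<beta> * Rf A T M N k xbar"
    unfolding v pr by (simp add: Rf_def Xs_def)
  finally show ?thesis by (simp add: x_def)
qed

lemma Xset_iff:
  fixes \<alpha> \<beta> C c k f A D T :: real and M N :: nat
  assumes b: "\<beta> > 0" and k: "k > 0" and M: "M \<ge> 1"
    and A: "A = (\<alpha> - C) / \<beta>" and D: "D = (c - C) / \<beta>" and T: "T = A - D + f"
  shows "T / real M \<in> Xset \<alpha> \<beta> C c k M N f \<longleftrightarrow> CondR A T M N k"
proof -
  have P: "psi_sym \<alpha> \<beta> C c k M N i xbar (T / real M) f = \<beta> * Rf A T M N k xbar" if "i < M" for i xbar
    using psi_Rf[OF b k M that A D T] .
  have i0: "0 < M" using M by simp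
  have "(\<forall>i<M. \<forall>xbar. 0 \<le> xbar \<longrightarrow> psi_sym \<alpha> \<beta> C c k M N i xbar (T / real M) f \<le> psi_sym \<alpha> \<beta> C c k M N i (T / real M) (T / real M) f)
     \<longleftrightarrow> (\<forall>xbar. 0 \<le> xbar \<longrightarrow> Rf A T M N k xbar \<le> Rf A T M N k (T / real M))"
  proof
    assume h: "\<forall>i<M. \<forall>xbar. 0 \<le> xbar \<longrightarrow> psi_sym \<alpha> \<beta> C c k M N i xbar (T / real M) f \<le> psi_sym \<alpha> \<beta> C c k M N i (T / real M) (T / real M) f"
    show "\<forall>xbar. 0 \<le> xbar \<longrightarrow> Rf A T M N k xbar \<le> Rf A T M N k (T / real M)"
    proof (intro allI impI)
      fix xbar :: real assume "0 \<le> xbar"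
      hence "\<beta> * Rf A T M N k xbar \<le> \<beta> * Rf A T M N k (T / real M)"
        using h i0 P[OF i0] by metis
      thus "Rf A T M N k xbar \<le> Rf A T M N k (T / real M)" using b by simp
    qed
  next
    assume h: "\<forall>xbar. 0 \<le> xbar \<longrightarrow> Rf A T M N k xbar \<le> Rf A T M N k (T / real M)"
    show "\<forall>i<M. \<forall>xbar. 0 \<le> xbar \<longrightarrow> psi_sym \<alpha> \<beta> C c k M N i xbar (T / real M) f \<le> psi_sym \<alpha> \<beta> C c k M N i (T / real M) (T / real M) f"
    proof (intro allI impI)
      fix i :: nat and xbar :: real assume "i < M" "0 \<le> xbar"
      thus "psi_sym \<alpha> \<beta> C c k M N i xbar (T / real M) f \<le> psi_sym \<alpha> \<beta> C c k M N i (T / real M) (T / real M) f"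
        using h P b by simp
    qed
  qed
  thus ?thesis unfolding Xset_def CondR_def by simp
qed

lemma interval_unique:
  fixes a b a' b' :: real
  assumes g: "\<forall>f. (a \<le> f \<and> f \<le> b) \<longleftrightarrow> P f" and ab: "a \<le> b"
    and g': "\<forall>f. (a' \<le> f \<and> f \<le> b') \<longleftrightarrow> P f"
  shows "a' = a \<and> b' = b"
proof -
  have ga: "(a \<le> x \<and> x \<le> b) \<longleftrightarrow> P x" for x using g by blast
  have gb: "(a' \<le> x \<and> x \<le> b') \<longleftrightarrow> P x" for x using g' by blast
  have "P a" "P b" using ga[of a] ga[of b] ab by auto
  hence 1: "a' \<le> a" "b \<le> b'" using gb[of a] gb[of b] by auto
  hence "P a'" "P b'" using gb[of a'] gb[of b'] ab by auto
  hence "a \<le> a'" "b' \<le> b" using ga[of a'] ga[of b'] by auto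
  with 1 show ?thesis by auto
qed

theorem lemma2:
  shows "\<exists>K::real. \<forall>(\<alpha>::real) (\<beta>::real) (C::real) (c::real) (k::real) (M::nat) (N::nat).
    (M \<ge> 1 \<and> N \<ge> 2 \<and> \<alpha> > 0 \<and> \<beta> > 0 \<and> C > 0 \<and> c \<ge> C \<and> k > 0) \<longrightarrow>
    (let \<alpha>x = (\<alpha> - C) / \<beta>; dC = (c - C) / \<beta>;
         xf = (\<lambda>f. (\<alpha>x - dC + f) / real M);
         good = (\<lambda>fl fh. \<forall>f. (fl \<le> f \<and> f \<le> fh) \<longleftrightarrow> xf f \<in> Xset \<alpha> \<beta> C c k M N f)
     in \<exists>fl fh. good fl fh \<and> (\<forall>fl' fh'. good fl' fh' \<longrightarrow> fl' = fl \<and> fh' = fh) \<and>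
          (\<forall>f. fl \<le> f \<and> f \<le> fh \<longrightarrow>
             (\<forall>j<N. spot_y \<alpha> \<beta> c k M N (\<lambda>_. f) (\<lambda>_. xf f) j = 0)) \<and>
          \<bar>fh - fl\<bar> \<le> K * \<bar>\<alpha>x / real M\<bar>)"
proof (intro exI[of _ 1] allI impI)
  fix \<alpha> \<beta> C c k :: real and M N :: nat
  assume H: "M \<ge> 1 \<and> N \<ge> 2 \<and> \<alpha> > 0 \<and> \<beta> > 0 \<and> C > 0 \<and> c \<ge> C \<and> k > 0"
  hence M: "M \<ge> 1" and b: "\<beta> > 0" and k: "k > 0" by auto
  have Mp: "real M > 0" using M by simp
  define A where "A = (\<alpha> - C) / \<beta>"
  define D where "D = (c - C) / \<beta>"
  have XI: "(A - D + f) / real M \<in> Xset \<alpha> \<beta> C c k M N f \<longleftrightarrow> CondR A (A - D + f) M N k" for f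
    using Xset_iff[OF b k M A_def D_def refl] .
  have SP: "spot_y \<alpha> \<beta> c k M N (\<lambda>_. f) (\<lambda>_. (A - D + f) / real M) j = 0" if "j < N" for f j
  proof -
    have s: "(\<Sum>i<M. (A - D + f) / real M) = A - D + f" using Mp by simp
    have "\<alpha> - c - \<beta> * (A - D + f) + \<beta> * f = 0"
      using b by (simp add: A_def D_def field_simps)
    thus ?thesis unfolding spot_y_formula[OF b k] s using that k by (simp add: clampv0)
  qed
  define good where "good = (\<lambda>fl fh. \<forall>f. (fl \<le> f \<and> f \<le> fh) \<longleftrightarrow> CondR A (A - D + f) M N k)"
  have main: "\<exists>fl fh. good fl fh \<and> fl \<le> fh \<and> \<bar>fh - fl\<bar> \<le> 1 * \<bar>A / real M\<bar>"
  proof (cases "A \<le> 0")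
    case True
    have "good (D - A) (D - A)" unfolding good_def
    proof
      fix f show "(D - A \<le> f \<and> f \<le> D - A) \<longleftrightarrow> CondR A (A - D + f) M N k"
        using L_neg[OF True k M, of "A - D + f" N] by linarith
    qed
    moreover have "\<bar>(D - A) - (D - A)\<bar> \<le> 1 * \<bar>A / real M\<bar>" by simp
    ultimately show ?thesis by blast
  next
    case False
    hence Ap: "A > 0" by simp
    define S where "S = {T. CondR A T M N k}"
    note LS = L_sup[OF Ap k M, of N, folded S_def]
    define Tst where "Tst = real M * A / (real M + 1)"
    have Tst0: "0 \<le> Tst" using Ap by (simp add: Tst_def)
    have g: "good (Tst - A + D) (Sup S - A + D)" unfolding good_def
    proof (intro allI iffI)
      fix f assume f: "Tst - A + D \<le> f \<and> f \<le> Sup S - A + D"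
      show "CondR A (A - D + f) M N k"
      proof (rule L_down[OF LS(3) k M])
        have "Tst \<le> A - D + f" using f by linarith
        thus "A - (A - D + f) \<le> (A - D + f) / real M" using Tstar_iff[OF M, of A "A - D + f"]
          unfolding Tst_def by blast
        show "0 \<le> A - D + f" using f Tst0 by simp
        show "A - D + f \<le> Sup S" using f by simp
      qed
    next
      fix f assume c: "CondR A (A - D + f) M N k"
      have "Tst \<le> A - D + f" using L_lower[OF c k M] Tstar_iff[OF M, of A "A - D + f"]
        unfolding Tst_def by blast
      moreover have "A - D + f \<le> Sup S" using cSup_upper[OF _ LS(2)] c by (simp add: S_def)
      ultimately show "Tst - A + D \<le> f \<and> f \<le> Sup S - A + D" by simp
    qed
    have le: "Tst \<le> Sup S" using LS(4) by (simp add: Tst_def)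
    have "Sup S - Tst \<le> A - Tst" using LS(5) by simp
    also have "A - Tst = A / (real M + 1)" by (simp add: Tst_def field_simps)
    also have "\<dots> \<le> A / real M" using Ap Mp by (intro divide_left_mono) auto
    finally have w: "\<bar>(Sup S - A + D) - (Tst - A + D)\<bar> \<le> 1 * \<bar>A / real M\<bar>" using le Ap by simp
    show ?thesis using g le w by (intro exI[of _ "Tst - A + D"] exI[of _ "Sup S - A + D"]) auto
  qed
  then obtain fl fh where g: "good fl fh" and ab: "fl \<le> fh" and w: "\<bar>fh - fl\<bar> \<le> 1 * \<bar>A / real M\<bar>" by blast
  have uniq: "\<forall>fl' fh'. good fl' fh' \<longrightarrow> fl' = fl \<and> fh' = fh"
  proof (intro allI impI)
    fix a b assume "good a b"
    thus "a = fl \<and> b = fh"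
      using interval_unique[of fl fh "\<lambda>f. CondR A (A - D + f) M N k" a b] g ab unfolding good_def
      by simp
  qed
  have XI': "((\<alpha> - C) / \<beta> - (c - C) / \<beta> + f) / real M \<in> Xset \<alpha> \<beta> C c k M N f
      \<longleftrightarrow> CondR A (A - D + f) M N k" for f
    using XI[of f] unfolding A_def D_def .
  have SP': "spot_y \<alpha> \<beta> c k M N (\<lambda>_. f) (\<lambda>_. ((\<alpha> - C) / \<beta> - (c - C) / \<beta> + f) / real M) j = 0"
    if "j < N" for f j using SP[OF that, of f] unfolding A_def D_def .
  have g': "\<forall>f. (fl \<le> f \<and> f \<le> fh) \<longleftrightarrow> ((\<alpha> - C) / \<beta> - (c - C) / \<beta> + f) / real M \<in> Xset \<alpha> \<beta> C c k M N f"
    using g unfolding good_def XI' .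
  have u': "\<forall>fl' fh'. (\<forall>f. (fl' \<le> f \<and> f \<le> fh') \<longleftrightarrow> ((\<alpha> - C) / \<beta> - (c - C) / \<beta> + f) / real M \<in> Xset \<alpha> \<beta> C c k M N f)
      \<longrightarrow> fl' = fl \<and> fh' = fh"
    using uniq unfolding good_def XI' .
  have w': "\<bar>fh - fl\<bar> \<le> 1 * \<bar>(\<alpha> - C) / \<beta> / real M\<bar>" using w unfolding A_def .
  show "let \<alpha>x = (\<alpha> - C) / \<beta>; dC = (c - C) / \<beta>;
         xf = (\<lambda>f. (\<alpha>x - dC + f) / real M);
         good = (\<lambda>fl fh. \<forall>f. (fl \<le> f \<and> f \<le> fh) \<longleftrightarrow> xf f \<in> Xset \<alpha> \<beta> C c k M N f)
     in \<exists>fl fh. good fl fh \<and> (\<forall>fl' fh'. good fl' fh' \<longrightarrow> fl' = fl \<and> fh' = fh) \<and>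
          (\<forall>f. fl \<le> f \<and> f \<le> fh \<longrightarrow>
             (\<forall>j<N. spot_y \<alpha> \<beta> c k M N (\<lambda>_. f) (\<lambda>_. xf f) j = 0)) \<and>
          \<bar>fh - fl\<bar> \<le> 1 * \<bar>\<alpha>x / real M\<bar>"
    unfolding Let_def
    by (intro exI[of _ fl] exI[of _ fh] conjI g' u' w' allI impI SP')
qed


end
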